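(* Let $1\le p<\infty$. For each $k\ge1$ define the sequence $b^{(k)}=(b^{(k)}_n)_{n\ge1}$ by $b^{(k)}_n=1/k$ if $n\le k$ and $b^{(k)}_n=0$ if $n>k$. Then $(b^{(k)})_{k\ge1}$ is a Schauder basis of $h_p$ (with norm $\|x\|_{h_p}=(\sum_{k\ge1}|k\Delta x_k|^p)^{1/p}$). Moreover, every $x\in h_p$ has a unique representation $$x=\sum_k\lambda_k b^{(k)},\qquad\text{where } \lambda_k=(Mx)_k=k(x_k-x_{k+1}) \text{ for all } k.$$
   Context: Sequences are complex sequences $x=(x_k)_{k\ge1}$, and $\Delta x_k=x_k-x_{k+1}$. For $1\le p<\infty$, $$h_p=\Big\{x:\ \sum_{k=1}^{\infty}(k|\Delta x_k|)^p<\infty,\ \lim_k x_k=0\Big\}.$$ For $p=1$ this is the Hahn space $h$. $M$ is the matrix with $(Mx)_k=k(x_k-x_{k+1})$. A Schauder basis $(b^{(k)})$ of a normed sequence space $\lambda$ is a sequence such that every $x\in\lambda$ has a unique scalar sequence $(\alpha_k)$ with $\|x-\sum_{k\le n}\alpha_kb^{(k)}\|\to0$ as $n\to\infty$. *)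

theory Defs
  imports "HOL-Analysis.Analysis"
begin

text \<open>Sequences x = (x_k)_{k>=1} are modelled as functions nat => complex whose
  value at index 0 is unused and normalised to 0.\<close>

definition Delta :: "(nat \<Rightarrow> complex) \<Rightarrow> nat \<Rightarrow> complex" where
  "Delta x k = x k - x (Suc k)"

definition Mop :: "(nat \<Rightarrow> complex) \<Rightarrow> nat \<Rightarrow> complex" where
  "Mop x k = of_nat k * (x k - x (Suc k))"

definition hp :: "real \<Rightarrow> (nat \<Rightarrow> complex) set" where
  "hp p = {x. x 0 = 0 \<and>
              summable (\<lambda>k. (real k * cmod (Delta x k)) powr p) \<and>
              x \<longlonglongrightarrow> 0}"

definition hp_norm :: "real \<Rightarrow> (nat \<Rightarrow> complex) \<Rightarrow> real" where
  "hp_norm p x = (\<Sum>k. (real k * cmod (Delta x k)) powr p) powr (1 / p)"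

definition bseq :: "nat \<Rightarrow> nat \<Rightarrow> complex" where
  "bseq k n = (if 1 \<le> n \<and> n \<le> k then 1 / of_nat k else 0)"

definition partial_exp :: "(nat \<Rightarrow> complex) \<Rightarrow> (nat \<Rightarrow> nat \<Rightarrow> complex) \<Rightarrow> nat \<Rightarrow> nat \<Rightarrow> complex" where
  "partial_exp \<alpha> b n = (\<lambda>j. \<Sum>k=1..n. \<alpha> k * b k j)"

definition has_expansion ::
  "((nat \<Rightarrow> complex) \<Rightarrow> real) \<Rightarrow> (nat \<Rightarrow> nat \<Rightarrow> complex) \<Rightarrow> (nat \<Rightarrow> complex) \<Rightarrow> (nat \<Rightarrow> complex) \<Rightarrow> bool" where
  "has_expansion nrm b x \<alpha> \<longleftrightarrow> (\<lambda>n. nrm (x - partial_exp \<alpha> b n)) \<longlonglongrightarrow> 0"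

definition schauder_basis ::
  "(nat \<Rightarrow> complex) set \<Rightarrow> ((nat \<Rightarrow> complex) \<Rightarrow> real) \<Rightarrow> (nat \<Rightarrow> nat \<Rightarrow> complex) \<Rightarrow> bool" where
  "schauder_basis S nrm b \<longleftrightarrow> (\<forall>k\<ge>1. b k \<in> S) \<and>
     (\<forall>x\<in>S. \<exists>!\<alpha>. \<alpha> 0 = 0 \<and> has_expansion nrm b x \<alpha>)"

end

theory Submission
  imports Defs
begin

lemma pe_val:
  assumes "1 \<le> j"
  shows "partial_exp \<alpha> bseq n j = (\<Sum>k=j..n. \<alpha> k / of_nat k)"
proof -
  have "partial_exp \<alpha> bseq n j = (\<Sum>k\<in>{1..n}. if j \<le> k then \<alpha> k / of_nat k else 0)"
    unfolding partial_exp_def bseq_def using assms by (intro sum.cong) auto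
  also have "\<dots> = (\<Sum>k\<in>{k\<in>{1..n}. j \<le> k}. \<alpha> k / of_nat k)"
    by (rule sum.inter_filter[symmetric]) simp
  also have "{k\<in>{1..n}. j \<le> k} = {j..n}" using assms by auto
  finally show ?thesis .
qed

lemma pe_zero: "partial_exp \<alpha> bseq n 0 = 0"
  unfolding partial_exp_def bseq_def by simp

lemma Delta_pe_le:
  assumes "1 \<le> j" "j \<le> n"
  shows "Delta (partial_exp \<alpha> bseq n) j = \<alpha> j / of_nat j"
  using assms by (simp add: Delta_def pe_val sum.atLeast_Suc_atMost)

lemma Delta_pe_gt:
  assumes "n < j"
  shows "Delta (partial_exp \<alpha> bseq n) j = 0"
  using assms by (simp add: Delta_def pe_val)

lemma Delta_diff: "Delta (x - y) j = Delta x j - Delta y j"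
  by (simp add: Delta_def)

lemma term_gt:
  assumes "n < j"
  shows "(real j * cmod (Delta (x - partial_exp \<alpha> bseq n) j)) powr p
         = (real j * cmod (Delta x j)) powr p"
  using assms by (simp add: Delta_diff Delta_pe_gt)

lemma summable_terms:
  assumes "summable (\<lambda>k. (real k * cmod (Delta x k)) powr p)"
  shows "summable (\<lambda>j. (real j * cmod (Delta (x - partial_exp \<alpha> bseq n) j)) powr p)"
proof -
  have ev: "eventually (\<lambda>j. (real j * cmod (Delta (x - partial_exp \<alpha> bseq n) j)) powr p
         = (real j * cmod (Delta x j)) powr p) sequentially"
    using eventually_gt_at_top[of n] by eventually_elim (rule term_gt)
  then show ?thesis using summable_cong[OF ev] assms by simp
qed

lemma term_Mop:
  assumes "j \<le> n"
  shows "(real j * cmod (Delta (x - partial_exp (Mop x) bseq n) j)) powr p = 0"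
proof (cases "j = 0")
  case True then show ?thesis by simp
next
  case False
  then have "Delta (x - partial_exp (Mop x) bseq n) j = 0"
    using assms by (simp add: Delta_diff Delta_pe_le) (simp add: Mop_def Delta_def)
  then show ?thesis by simp
qed

lemma term_k:
  assumes "1 \<le> k" "k \<le> n"
  shows "real k * cmod (Delta (x - partial_exp \<alpha> bseq n) k) = cmod (Mop x k - \<alpha> k)"
proof -
  have "real k * cmod (Delta (x - partial_exp \<alpha> bseq n) k)
      = cmod (of_nat k * (Delta x k - \<alpha> k / of_nat k))"
    using assms by (simp add: Delta_diff Delta_pe_le norm_mult)
  also have "of_nat k * (Delta x k - \<alpha> k / of_nat k) = Mop x k - \<alpha> k"
    using assms by (simp add: Mop_def Delta_def field_simps)
  finally show ?thesis .
qed

lemma existence: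
  assumes p: "1 \<le> p" and x: "x \<in> hp p"
  shows "has_expansion (hp_norm p) bseq x (Mop x)"
proof -
  define f where "f = (\<lambda>k. (real k * cmod (Delta x k)) powr p)"
  have sf: "summable f" using x by (simp add: hp_def f_def)
  define g where "g = (\<lambda>n j. (real j * cmod (Delta (x - partial_exp (Mop x) bseq n) j)) powr p)"
  have sg: "summable (g n)" for n
    unfolding g_def by (rule summable_terms) (use sf in \<open>simp add: f_def\<close>)
  have eq: "suminf (g n) = (\<Sum>i. f (i + Suc n))" for n
  proof -
    have "suminf (g n) = (\<Sum>i. g n (i + Suc n)) + (\<Sum>i<Suc n. g n i)"
      by (rule suminf_split_initial_segment[OF sg])
    also have "(\<Sum>i<Suc n. g n i) = 0"
      by (intro sum.neutral) (auto simp: g_def term_Mop)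
    also have "(\<lambda>i. g n (i + Suc n)) = (\<lambda>i. f (i + Suc n))"
    proof (rule ext)
      fix i :: nat
      have "n < i + Suc n" by simp
      then show "g n (i + Suc n) = f (i + Suc n)" unfolding g_def f_def by (rule term_gt)
    qed
    finally show ?thesis by simp
  qed
  have t0: "(\<lambda>n. (\<Sum>i. f (i + n))) \<longlonglongrightarrow> 0" by (rule suminf_exist_split2[OF sf])
  have t1: "(\<lambda>n. suminf (g n)) \<longlonglongrightarrow> 0"
    unfolding eq using LIMSEQ_Suc[OF t0] by simp
  have nn: "0 \<le> suminf (g n)" for n
    using sg by (intro suminf_nonneg) (auto simp: g_def)
  have "(\<lambda>n. suminf (g n) powr (1/p)) \<longlonglongrightarrow> 0"
    by (rule tendsto_zero_powrI[OF t1 tendsto_const]) (use nn p in auto)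
  then show ?thesis
    unfolding has_expansion_def hp_norm_def g_def by simp
qed

lemma uniqueness:
  assumes p: "1 \<le> p" and x: "x \<in> hp p" and e: "has_expansion (hp_norm p) bseq x \<alpha>"
    and k: "1 \<le> k"
  shows "\<alpha> k = Mop x k"
proof -
  define g where "g = (\<lambda>n j. (real j * cmod (Delta (x - partial_exp \<alpha> bseq n) j)) powr p)"
  have sg: "summable (g n)" for n
    unfolding g_def by (rule summable_terms) (use x in \<open>simp add: hp_def\<close>)
  have lim: "(\<lambda>n. suminf (g n) powr (1/p)) \<longlonglongrightarrow> 0"
    using e unfolding has_expansion_def hp_norm_def g_def by simp
  have "cmod (Mop x k - \<alpha> k) \<le> suminf (g n) powr (1/p)" if "n \<ge> k" for n
  proof -
    have "g n k \<le> suminf (g n)"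
      using sum_le_suminf[OF sg, of "{k}"] by (simp add: g_def)
    moreover have "g n k = cmod (Mop x k - \<alpha> k) powr p"
      unfolding g_def using term_k[OF k that] by simp
    ultimately have "(cmod (Mop x k - \<alpha> k) powr p) powr (1/p) \<le> suminf (g n) powr (1/p)"
      using p by (intro powr_mono2) auto
    then show ?thesis using p by (simp add: powr_powr)
  qed
  then have "cmod (Mop x k - \<alpha> k) \<le> 0"
    by (intro LIMSEQ_le_const[OF lim]) auto
  then show ?thesis by simp
qed

lemma bseq_hp: "1 \<le> k \<Longrightarrow> bseq k \<in> hp p"
proof -
  assume k: "1 \<le> k"
  have ev: "eventually (\<lambda>n. bseq k n = 0) sequentially"
    using eventually_gt_at_top[of k] by eventually_elim (simp add: bseq_def)
  have "bseq k \<longlonglongrightarrow> 0" by (rule tendsto_eventually[OF ev])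
  moreover have "summable (\<lambda>j. (real j * cmod (Delta (bseq k) j)) powr p)"
  proof -
    have "eventually (\<lambda>j. (real j * cmod (Delta (bseq k) j)) powr p = 0) sequentially"
      using eventually_gt_at_top[of k] by eventually_elim (simp add: bseq_def Delta_def)
    then show ?thesis using summable_cong[of _ "\<lambda>_. 0::real"] by simp
  qed
  ultimately show "bseq k \<in> hp p" by (simp add: hp_def bseq_def)
qed

theorem theorem2p5:
  fixes p :: real
  assumes "1 \<le> p"
  shows "schauder_basis (hp p) (hp_norm p) bseq \<and>
         (\<forall>x\<in>hp p. \<forall>\<alpha>. (\<alpha> 0 = 0 \<and> has_expansion (hp_norm p) bseq x \<alpha>) \<longleftrightarrow>
                         (\<alpha> 0 = 0 \<and> (\<forall>k\<ge>1. \<alpha> k = Mop x k)))"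
proof -
  have char: "(\<alpha> 0 = 0 \<and> has_expansion (hp_norm p) bseq x \<alpha>) \<longleftrightarrow> \<alpha> = Mop x"
    if x: "x \<in> hp p" for x \<alpha>
  proof
    assume a: "\<alpha> 0 = 0 \<and> has_expansion (hp_norm p) bseq x \<alpha>"
    show "\<alpha> = Mop x"
    proof
      fix k show "\<alpha> k = Mop x k"
        using a uniqueness[OF assms x, of \<alpha> k] by (cases "k = 0") (auto simp: Mop_def)
    qed
  next
    assume "\<alpha> = Mop x"
    then show "\<alpha> 0 = 0 \<and> has_expansion (hp_norm p) bseq x \<alpha>"
      using existence[OF assms x] by (simp add: Mop_def)
  qed
  have char2: "(\<alpha> = Mop x) \<longleftrightarrow> (\<alpha> 0 = 0 \<and> (\<forall>k\<ge>1. \<alpha> k = Mop x k))" for x \<alpha>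
  proof
    assume "\<alpha> 0 = 0 \<and> (\<forall>k\<ge>1. \<alpha> k = Mop x k)"
    then show "\<alpha> = Mop x"
      by (intro ext, case_tac xa) (auto simp: Mop_def)
  qed (simp add: Mop_def)
  have b: "\<forall>k\<ge>1. bseq k \<in> hp p" using bseq_hp by auto
  have u: "\<forall>x\<in>hp p. \<exists>!\<alpha>. \<alpha> 0 = 0 \<and> has_expansion (hp_norm p) bseq x \<alpha>"
    using char by auto
  have r: "\<forall>x\<in>hp p. \<forall>\<alpha>. (\<alpha> 0 = 0 \<and> has_expansion (hp_norm p) bseq x \<alpha>) \<longleftrightarrow>
                         (\<alpha> 0 = 0 \<and> (\<forall>k\<ge>1. \<alpha> k = Mop x k))"
    using char char2 by simp
  show ?thesis unfolding schauder_basis_def using b u r by blast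
qed

end
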